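(* Let $G$ be a vigorous subgroup of $\operatorname{Homeo}(\mathfrak{C})$. Let $A\in K_{\mathfrak{C}}$ and let $C,D$ be clopen subsets of $\mathfrak{C}$ such that $A$, $C$, $D$ are pairwise disjoint and $A\cup C\cup D\neq\mathfrak{C}$. Then $$\operatorname{pstab}_G(A)=\langle \operatorname{pstab}_G(A\cup C)\cup \operatorname{pstab}_G(A\cup D)\rangle.$$
   Context: $\mathfrak{C}$ denotes a Cantor space (a space homeomorphic to $\{0,1\}^\omega$). Groups of homeomorphisms act on the right. $K_{\mathfrak{C}}$ denotes the set of non-empty proper clopen subsets of $\mathfrak{C}$. For $\gamma\in\operatorname{Homeo}(\mathfrak{C})$, $\operatorname{supp}(\gamma)=\{p\in\mathfrak{C}: p\gamma\neq p\}$. For $G\le\operatorname{Homeo}(\mathfrak{C})$ and $A\subseteq\mathfrak{C}$, $\operatorname{pstab}_G(A)=\{g\in G: pg=p \text{ for all } p\in A\}$. A subset $S\subseteq \operatorname{Homeo}(\mathfrak{C})$ is vigorous if for all clopen $A,B,C\subseteq\mathfrak{C}$ with $B,C$ non-empty proper subsets of $A$ there is $\gamma\in S$ with $\operatorname{supp}(\gamma)\subseteq A$ and $B\gamma\subseteq C$. *)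

theory Defs
  imports "HOL-Analysis.Analysis"
begin

definition cantor_top :: "(nat \<Rightarrow> bool) topology" where
  "cantor_top = product_topology (\<lambda>_. discrete_topology (UNIV :: bool set)) UNIV"

definition is_cantor_space :: "'a::topological_space itself \<Rightarrow> bool" where
  "is_cantor_space _ \<longleftrightarrow> (euclidean :: 'a topology) homeomorphic_space cantor_top"

definition Homeo :: "('a::topological_space \<Rightarrow> 'a) set" where
  "Homeo = {f. homeomorphic_map euclidean euclidean f}"

definition clopen_set :: "'a::topological_space set \<Rightarrow> bool" where
  "clopen_set A \<longleftrightarrow> open A \<and> closed A"

definition K_sets :: "'a::topological_space set set" where
  "K_sets = {A. clopen_set A \<and> A \<noteq> {} \<and> A \<noteq> UNIV}"

definition supp :: "('a \<Rightarrow> 'a) \<Rightarrow> 'a set" where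
  "supp g = {p. g p \<noteq> p}"

definition pstab :: "('a \<Rightarrow> 'a) set \<Rightarrow> 'a set \<Rightarrow> ('a \<Rightarrow> 'a) set" where
  "pstab G A = {g \<in> G. \<forall>p\<in>A. g p = p}"

definition vigorous :: "('a::topological_space \<Rightarrow> 'a) set \<Rightarrow> bool" where
  "vigorous S \<longleftrightarrow> (\<forall>A B C. clopen_set A \<and> clopen_set B \<and> clopen_set C \<and>
      B \<noteq> {} \<and> B \<subset> A \<and> C \<noteq> {} \<and> C \<subset> A \<longrightarrow>
      (\<exists>\<gamma>\<in>S. supp \<gamma> \<subseteq> A \<and> \<gamma> ` B \<subseteq> C))"

definition homeo_subgroup :: "('a::topological_space \<Rightarrow> 'a) set \<Rightarrow> bool" where
  "homeo_subgroup G \<longleftrightarrow> G \<subseteq> Homeo \<and> id \<in> G \<and>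
     (\<forall>f\<in>G. \<forall>g\<in>G. f \<circ> g \<in> G) \<and> (\<forall>f\<in>G. inv f \<in> G)"

inductive_set gen_subgroup :: "('a \<Rightarrow> 'a) set \<Rightarrow> ('a \<Rightarrow> 'a) set" for S where
  gen_id: "id \<in> gen_subgroup S"
| gen_elem: "s \<in> S \<Longrightarrow> s \<in> gen_subgroup S"
| gen_inv: "s \<in> S \<Longrightarrow> inv s \<in> gen_subgroup S"
| gen_comp: "f \<in> gen_subgroup S \<Longrightarrow> g \<in> gen_subgroup S \<Longrightarrow> f \<circ> g \<in> gen_subgroup S"

end

theory Submission
  imports Defs
begin

definition cyl :: "nat set \<Rightarrow> (nat \<Rightarrow> bool) \<Rightarrow> (nat \<Rightarrow> bool) set" where
  "cyl J x = {y. \<forall>i\<in>J. y i = x i}"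

lemma cantor_topspace: "topspace cantor_top = UNIV"
  by (simp add: cantor_top_def PiE_UNIV_domain)

lemma cyl_eq: "cyl J x = (\<Pi>\<^sub>E i\<in>UNIV. (if i \<in> J then {x i} else UNIV))"
  by (auto simp: cyl_def PiE_UNIV_domain split: if_splits)

lemma cyl_open: "finite J \<Longrightarrow> openin cantor_top (cyl J x)"
  unfolding cyl_eq cantor_top_def
  by (rule product_topology_basis) (auto elim: finite_subset[rotated])

lemma neq_open: "openin cantor_top {y. y i \<noteq> b}"
proof -
  have "{y. y i \<noteq> b} = cyl {i} (\<lambda>_. \<not> b)" by (auto simp: cyl_def)
  then show ?thesis using cyl_open[of "{i}"] by simp
qed

lemma cyl_closed: "finite J \<Longrightarrow> closedin cantor_top (cyl J x)"
proof -
  assume "finite J"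
  have "UNIV - cyl J x = (\<Union>i\<in>J. {y. y i \<noteq> x i})" by (auto simp: cyl_def)
  moreover have "openin cantor_top (\<Union>i\<in>J. {y. y i \<noteq> x i})"
    using neq_open by blast
  ultimately show ?thesis by (simp add: closedin_def cantor_topspace)
qed

lemma cantor_nbhd:
  assumes "openin cantor_top Q" "x \<in> Q"
  shows "\<exists>J. finite J \<and> cyl J x \<subseteq> Q"
proof -
  obtain X where X: "x \<in> (\<Pi>\<^sub>E i\<in>UNIV. X i)" "finite {i. X i \<noteq> topspace (discrete_topology (UNIV::bool set))}"
     "(\<Pi>\<^sub>E i\<in>UNIV. X i) \<subseteq> Q"
    using product_topology_open_contains_basis[OF assms[unfolded cantor_top_def]] by blast
  have "cyl {i. X i \<noteq> UNIV} x \<subseteq> (\<Pi>\<^sub>E i\<in>UNIV. X i)"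
  proof
    fix y assume "y \<in> cyl {i. X i \<noteq> UNIV} x"
    then have "\<And>i. y i \<in> X i" using X(1)
      apply (simp add: cyl_def PiE_UNIV_domain Pi_iff)
      subgoal for i by (cases "X i = UNIV") auto
      done
    then show "y \<in> (\<Pi>\<^sub>E i\<in>UNIV. X i)" by (simp add: PiE_UNIV_domain)
  qed
  moreover have "finite {i. X i \<noteq> UNIV}" using X(2) by simp
  ultimately show ?thesis using X(3) by blast
qed

lemma cyl_infinite: "finite J \<Longrightarrow> infinite (cyl J x)"
proof -
  assume J: "finite J"
  obtain m where m: "\<forall>i\<in>J. i < m" using J finite_nat_bounded by blast
  define f where "f k = x(m + k := \<not> x (m + k))" for k
  have "inj f"
  proof
    fix a b assume "f a = f b"
    then have "f a (m+a) = f b (m+a)" by simp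
    then show "a = b" unfolding f_def by (auto split: if_splits)
  qed
  moreover have "range f \<subseteq> cyl J x" using m by (auto simp: f_def cyl_def)
  ultimately show ?thesis
  proof -
    assume inj: "inj f" and rg: "range f \<subseteq> cyl J x"
    show ?thesis
    proof
      assume "finite (cyl J x)"
      then have "finite (range f)" using rg finite_subset by blast
      then have "finite (UNIV::nat set)" using inj finite_imageD by blast
      then show False by simp
    qed
  qed
qed

lemma cantor_avoid:
  assumes "openin cantor_top Q" "Q \<noteq> {}" "finite F"
  shows "\<exists>K. openin cantor_top K \<and> closedin cantor_top K \<and> K \<noteq> {} \<and> K \<subseteq> Q \<and> K \<inter> F = {}"
proof -
  obtain x where x: "x \<in> Q" using assms by auto
  obtain J where J: "finite J" "cyl J x \<subseteq> Q" using cantor_nbhd[OF assms(1) x] by blast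
  have "infinite (cyl J x - F)" using cyl_infinite[OF J(1)] assms(3) by (simp add: Diff_infinite_finite)
  then have "cyl J x - F \<noteq> {}" using finite.emptyI by metis
  then obtain z where z: "z \<in> cyl J x" "z \<notin> F" by blast
  have "\<forall>f\<in>F. \<exists>i. f i \<noteq> z i"
  proof
    fix f assume "f \<in> F"
    then have "f \<noteq> z" using z(2) by blast
    show "\<exists>i. f i \<noteq> z i"
    proof (rule ccontr)
      assume "\<not> (\<exists>i. f i \<noteq> z i)"
      then have "f = z" by (intro ext) simp
      then show False using \<open>f \<noteq> z\<close> by contradiction
    qed
  qed
  from bchoice[OF this] obtain d where d: "\<forall>f\<in>F. f (d f) \<noteq> z (d f)" by blast
  define J' where "J' = J \<union> d ` F"
  have fJ: "finite J'" using J assms(3) by (simp add: J'_def)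
  have "cyl J' z \<subseteq> cyl J x" using z(1) by (auto simp: cyl_def J'_def)
  moreover have "cyl J' z \<inter> F = {}" using d by (auto simp: cyl_def J'_def)
  moreover have "z \<in> cyl J' z" by (simp add: cyl_def)
  ultimately have "cyl J' z \<subseteq> Q" "cyl J' z \<noteq> {}" "cyl J' z \<inter> F = {}" using J(2) by auto
  then show ?thesis using cyl_open[OF fJ, of z] cyl_closed[OF fJ, of z] by blast
qed


lemma cantor_clopen_avoid:
  fixes Q :: "'a::topological_space set"
  assumes "is_cantor_space TYPE('a)" "open Q" "Q \<noteq> {}" "finite F"
  shows "\<exists>T. clopen_set T \<and> T \<noteq> {} \<and> T \<subseteq> Q \<and> T \<inter> F = {}"
proof -
  have "(euclidean::'a topology) homeomorphic_space cantor_top"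
    using assms(1) by (simp add: is_cantor_space_def)
  then obtain h where h: "homeomorphic_map (euclidean::'a topology) cantor_top h"
    unfolding homeomorphic_space by blast
  have ho: "openin cantor_top (h ` Q)" using homeomorphic_map_openness[OF h] assms(2) by simp
  obtain K where K: "openin cantor_top K" "closedin cantor_top K" "K \<noteq> {}" "K \<subseteq> h ` Q" "K \<inter> h ` F = {}"
    using cantor_avoid[OF ho _ finite_imageI[OF assms(4)]] assms(3) by (meson image_is_empty)
  have cont: "continuous_map euclidean cantor_top h" using h by (rule homeomorphic_imp_continuous_map)
  have inj: "inj h" using homeomorphic_imp_injective_map[OF h] by simp
  define T where "T = {x. h x \<in> K}"
  have "open T" using openin_continuous_map_preimage[OF cont K(1)] by (simp add: T_def)
  moreover have "closed T" using closedin_continuous_map_preimage[OF cont K(2)] by (simp add: T_def)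
  moreover have "T \<noteq> {}"
  proof -
    obtain k where "k \<in> K" using K(3) by blast
    then obtain q where "h q = k" using K(4) by blast
    then have "q \<in> T" using \<open>k \<in> K\<close> by (simp add: T_def)
    then show ?thesis by blast
  qed
  moreover have "T \<subseteq> Q"
  proof
    fix x assume "x \<in> T"
    then have "h x \<in> h ` Q" using K(4) by (auto simp: T_def)
    then obtain q where "q \<in> Q" "h x = h q" by blast
    then show "x \<in> Q" using inj by (metis injD)
  qed
  moreover have "T \<inter> F = {}" using K(5) by (auto simp: T_def)
  ultimately show ?thesis by (auto simp: clopen_set_def)
qed

lemma Homeo_bij: "g \<in> Homeo \<Longrightarrow> bij g"
proof -
  assume "g \<in> Homeo"
  then have h: "homeomorphic_map euclidean euclidean g" by (simp add: Homeo_def)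
  have "inj g" using homeomorphic_imp_injective_map[OF h] by simp
  moreover have "surj g" using homeomorphic_imp_surjective_map[OF h] by simp
  ultimately show "bij g" by (simp add: bij_def)
qed

lemma Homeo_cont: "g \<in> Homeo \<Longrightarrow> continuous_map euclidean euclidean g"
  unfolding Homeo_def using homeomorphic_imp_continuous_map by blast

lemma clopen_preimage:
  assumes "g \<in> Homeo" "clopen_set T" shows "clopen_set {p. g p \<in> T}"
  using openin_continuous_map_preimage[OF Homeo_cont[OF assms(1)], of T]
        closedin_continuous_map_preimage[OF Homeo_cont[OF assms(1)], of T] assms(2)
  by (simp add: clopen_set_def)

lemma hs_G: "homeo_subgroup G \<Longrightarrow> g \<in> G \<Longrightarrow> bij g"
  unfolding homeo_subgroup_def using Homeo_bij by blast

lemma inv_fix: "bij v \<Longrightarrow> v p = p \<Longrightarrow> inv v p = p"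
  by (metis bij_is_inj inv_f_f)

lemma small_in1:
  fixes A C D S :: "'a::topological_space set"
  assumes hG: "homeo_subgroup G" and vig: "vigorous G"
    and cA: "clopen_set A" and cC: "clopen_set C" and cD: "clopen_set D"
    and "A \<inter> C = {}" "A \<inter> D = {}" "C \<inter> D = {}" "D \<noteq> {}" "A \<union> C \<union> D \<noteq> UNIV"
    and y: "y \<in> G" and cS: "clopen_set S" and SA: "S \<inter> A = {}" and yfix: "\<forall>p. p \<notin> S \<longrightarrow> y p = p"
    and r: "r \<notin> A" "r \<notin> C" "r \<notin> S"
  shows "y \<in> gen_subgroup (pstab G (A \<union> C) \<union> pstab G (A \<union> D))"
proof -
  define E where "E = - (A \<union> C \<union> D)"
  define W where "W = - (A \<union> C)"
  have WDE: "W = D \<union> E" using assms by (auto simp: W_def E_def)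
  show ?thesis
  proof (cases "S \<inter> W = {}")
    case True
    have "y \<in> pstab G (A \<union> D)" using y yfix SA True WDE by (auto simp: pstab_def)
    then show ?thesis by (intro gen_elem) auto
  next
    case False
    have cW: "clopen_set W" using cA cC by (auto simp: clopen_set_def W_def intro: open_Compl closed_Compl)
    have cE: "clopen_set E" using cA cC cD by (auto simp: clopen_set_def E_def intro: open_Compl closed_Compl)
    have cSW: "clopen_set (S \<inter> W)" using cS cW by (auto simp: clopen_set_def)
    have "S \<inter> W \<subset> W" using r by (auto simp: W_def)
    moreover have "E \<subset> W" using WDE assms by (auto simp: E_def)
    moreover have "E \<noteq> {}" using assms by (auto simp: E_def)
    ultimately obtain \<gamma> where g: "\<gamma> \<in> G" "supp \<gamma> \<subseteq> W" "\<gamma> ` (S \<inter> W) \<subseteq> E"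
      using vig cW cSW cE False unfolding vigorous_def by blast
    have gfix: "\<And>p. p \<notin> W \<Longrightarrow> \<gamma> p = p" using g(2) by (auto simp: supp_def)
    have bg: "bij \<gamma>" using hs_G[OF hG g(1)] .
    have gAC: "\<gamma> \<in> pstab G (A \<union> C)" using g(1) gfix by (auto simp: pstab_def W_def)
    define z where "z = \<gamma> \<circ> y \<circ> inv \<gamma>"
    have zG: "z \<in> G" using hG g(1) y unfolding z_def homeo_subgroup_def by blast
    have "z p = p" if p: "p \<in> A \<union> D" for p
    proof -
      define p0 where "p0 = inv \<gamma> p"
      have gp0: "\<gamma> p0 = p" using bg by (simp add: p0_def bij_is_surj surj_f_inv_f)
      show ?thesis
      proof (cases "p0 \<in> W")
        case False
        then have "p0 = p" using gfix gp0 by metis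
        then have "p0 \<in> A" using False p \<open>C \<inter> D = {}\<close> by (auto simp: W_def)
        then have "y p0 = p0" using SA yfix by blast
        then show ?thesis using gp0 by (simp add: z_def p0_def)
      next
        case True
        have "p \<in> W"
        proof (rule ccontr)
          assume "p \<notin> W"
          then have "\<gamma> p = p" using gfix by blast
          then have "p0 = p" using gp0 bg by (metis bij_is_inj injD)
          then show False using True \<open>p \<notin> W\<close> by simp
        qed
        then have "p \<in> D" using p by (auto simp: W_def)
        have "p0 \<notin> S"
        proof
          assume "p0 \<in> S"
          then have "p \<in> E" using g(3) True gp0 by blast
          then show False using \<open>p \<in> D\<close> by (simp add: E_def)
        qed
        then have "y p0 = p0" using yfix by blast
        then show ?thesis using gp0 by (simp add: z_def p0_def)
      qed
    qed
    then have zst: "z \<in> pstab G (A \<union> D)" using zG by (auto simp: pstab_def)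
    have "y = inv \<gamma> \<circ> z \<circ> \<gamma>"
      using bg by (simp add: z_def fun_eq_iff bij_is_inj bij_is_surj surj_f_inv_f inv_f_f)
    moreover have "inv \<gamma> \<in> gen_subgroup (pstab G (A \<union> C) \<union> pstab G (A \<union> D))"
      using gAC by (intro gen_inv) auto
    moreover have "\<gamma> \<in> gen_subgroup (pstab G (A \<union> C) \<union> pstab G (A \<union> D))"
      using gAC by (intro gen_elem) auto
    moreover have "z \<in> gen_subgroup (pstab G (A \<union> C) \<union> pstab G (A \<union> D))"
      using zst by (intro gen_elem) auto
    ultimately show ?thesis by (simp add: gen_comp)
  qed
qed


lemma small_in:
  fixes A C D S :: "'a::topological_space set"
  assumes hG: "homeo_subgroup G" and vig: "vigorous G"
    and cA: "clopen_set A" and cC: "clopen_set C" and cD: "clopen_set D"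
    and AC: "A \<inter> C = {}" and AD: "A \<inter> D = {}" and CD: "C \<inter> D = {}"
    and Cne: "C \<noteq> {}" and Dne: "D \<noteq> {}" and U: "A \<union> C \<union> D \<noteq> UNIV"
    and y: "y \<in> G" and cS: "clopen_set S" and SA: "S \<inter> A = {}" and yfix: "\<forall>p. p \<notin> S \<longrightarrow> y p = p"
    and r: "r \<notin> A" "r \<notin> S"
  shows "y \<in> gen_subgroup (pstab G (A \<union> C) \<union> pstab G (A \<union> D))"
proof (cases "r \<in> C")
  case True
  then have "r \<notin> D" using CD by blast
  have "D \<inter> C = {}" using CD by blast
  moreover have "A \<union> D \<union> C \<noteq> UNIV" using U by (simp add: Un_ac)
  ultimately have "y \<in> gen_subgroup (pstab G (A \<union> D) \<union> pstab G (A \<union> C))"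
    using small_in1[OF hG vig cA cD cC AD AC _ Cne _ y cS SA yfix r(1) \<open>r \<notin> D\<close> r(2)] by blast
  then show ?thesis by (simp add: Un_commute)
next
  case False
  then show ?thesis using small_in1[OF hG vig cA cC cD AC AD CD Dne U y cS SA yfix r(1) False r(2)] by blast
qed

theorem lemma2p9:
  fixes G :: "('a::topological_space \<Rightarrow> 'a) set"
    and A C D :: "'a set"
  assumes "is_cantor_space TYPE('a)"
    and "homeo_subgroup G"
    and "vigorous G"
    and "A \<in> K_sets"
    and "clopen_set C" and "clopen_set D"
    and "A \<inter> C = {}" and "A \<inter> D = {}" and "C \<inter> D = {}"
    and "A \<union> C \<union> D \<noteq> UNIV"
  shows "pstab G A = gen_subgroup (pstab G (A \<union> C) \<union> pstab G (A \<union> D))"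
proof
  note hG = assms(2)
  have Gid: "id \<in> G" and Gcomp: "\<And>f g. f \<in> G \<Longrightarrow> g \<in> G \<Longrightarrow> f \<circ> g \<in> G"
    and Ginv: "\<And>f. f \<in> G \<Longrightarrow> inv f \<in> G" using hG by (auto simp: homeo_subgroup_def)
  show "gen_subgroup (pstab G (A \<union> C) \<union> pstab G (A \<union> D)) \<subseteq> pstab G A"
  proof
    fix h assume "h \<in> gen_subgroup (pstab G (A \<union> C) \<union> pstab G (A \<union> D))"
    then show "h \<in> pstab G A"
    proof induction
      case gen_id
      show ?case using Gid by (simp add: pstab_def id_def)
    next
      case (gen_elem s)
      then show ?case by (auto simp: pstab_def)
    next
      case (gen_inv s)
      then have sG: "s \<in> G" and sfix: "\<forall>p\<in>A. s p = p" by (auto simp: pstab_def)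
      have "bij s" using hs_G[OF hG sG] .
      have "inv s p = p" if "p \<in> A" for p
        by (rule inv_fix[OF \<open>bij s\<close>]) (use sfix that in blast)
      then have "\<forall>p\<in>A. inv s p = p" by blast
      then show ?case using Ginv[OF sG] by (simp add: pstab_def)
    next
      case (gen_comp f g)
      then have "f \<in> G" "g \<in> G" "\<forall>p\<in>A. f p = p" "\<forall>p\<in>A. g p = p" by (auto simp: pstab_def)
      then have "f \<circ> g \<in> G" "\<forall>p\<in>A. (f \<circ> g) p = p" using Gcomp by auto
      then show ?case unfolding pstab_def by blast
    qed
  qed
next
  note hG = assms(2) and vig = assms(3)
  have Gid: "id \<in> G" and Gcomp: "\<And>f g. f \<in> G \<Longrightarrow> g \<in> G \<Longrightarrow> f \<circ> g \<in> G"
    and Ginv: "\<And>f. f \<in> G \<Longrightarrow> inv f \<in> G" and GH: "G \<subseteq> Homeo" using hG by (auto simp: homeo_subgroup_def)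
  have cA: "clopen_set A" and Ane: "A \<noteq> {}" and AU: "A \<noteq> UNIV" using assms(4) by (auto simp: K_sets_def)
  let ?H = "gen_subgroup (pstab G (A \<union> C) \<union> pstab G (A \<union> D))"
  show "pstab G A \<subseteq> ?H"
  proof
    fix g assume gA: "g \<in> pstab G A"
    then have gG: "g \<in> G" and gfix: "\<And>p. p \<in> A \<Longrightarrow> g p = p" by (auto simp: pstab_def)
    show "g \<in> ?H"
    proof (cases "C = {} \<or> D = {}")
      case True
      then show ?thesis using gA by (intro gen_elem) auto
    next
      case False
      then have Cne: "C \<noteq> {}" and Dne: "D \<noteq> {}" by auto
      have bg: "bij g" using hs_G[OF hG gG] .
      obtain q where q: "q \<notin> A" using AU by blast
      have oU: "open (- A)" using cA by (simp add: clopen_set_def open_Compl)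
      have "- A \<noteq> {}" using q by blast
      then obtain T where T: "clopen_set T" "T \<noteq> {}" "T \<subseteq> - A" "T \<inter> {q, g q} = {}"
        using cantor_clopen_avoid[OF assms(1) oU, of "{q, g q}"] by auto
      obtain t where t: "t \<in> T" using T(2) by blast
      have oT: "open T" using T(1) by (simp add: clopen_set_def)
      obtain T' where T': "clopen_set T'" "T' \<noteq> {}" "T' \<subseteq> T" "T' \<inter> {t} = {}"
        using cantor_clopen_avoid[OF assms(1) oT T(2), of "{t}"] by auto
      define Y where "Y = A \<union> T"
      have cY: "clopen_set Y" using cA T(1) by (auto simp: clopen_set_def Y_def)
      have "T \<subset> Y" using Ane T(3) by (auto simp: Y_def)
      moreover have "T' \<subset> Y" using T'(3) \<open>T \<subset> Y\<close> by blast
      ultimately obtain v where v: "v \<in> G" "supp v \<subseteq> Y" "v ` T \<subseteq> T'"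
        using vig[unfolded vigorous_def, rule_format, of Y T T'] cY T(1,2) T'(1,2) by blast
      have vfix: "\<And>p. p \<notin> Y \<Longrightarrow> v p = p" using v(2) by (auto simp: supp_def)
      have bv: "bij v" using hs_G[OF hG v(1)] .
      have vinvA: "inv v p \<in> A" if p: "p \<in> A \<union> (T - T')" for p
      proof -
        define p0 where "p0 = inv v p"
        have vp0: "v p0 = p" using bv by (simp add: p0_def bij_is_surj surj_f_inv_f)
        show ?thesis
        proof (cases "p0 \<in> Y")
          case False
          then have "p0 = p" using vfix vp0 by metis
          then show ?thesis using False p by (auto simp: Y_def p0_def)
        next
          case True
          have "p0 \<notin> T"
          proof
            assume "p0 \<in> T"
            then have "p \<in> T'" using v(3) vp0 by blast
            then show False using p T(3) T'(3) by auto
          qed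
          then show ?thesis using True by (simp add: Y_def p0_def)
        qed
      qed
      define g' where "g' = v \<circ> g \<circ> inv v"
      define x where "x = v \<circ> inv g \<circ> inv v \<circ> g"
      have g'G: "g' \<in> G" unfolding g'_def using Gcomp[OF Gcomp[OF v(1) gG] Ginv[OF v(1)]] .
      have xG: "x \<in> G" unfolding x_def using Gcomp[OF Gcomp[OF Gcomp[OF v(1) Ginv[OF gG]] Ginv[OF v(1)]] gG] .
      have gdec: "g = g' \<circ> x"
        using bv bg by (simp add: g'_def x_def fun_eq_iff bij_is_inj bij_is_surj surj_f_inv_f inv_f_f)
      have g'fix: "\<forall>p. p \<notin> (- A - (T - T')) \<longrightarrow> g' p = p"
      proof (intro allI impI)
        fix p assume "p \<notin> (- A - (T - T'))"
        then have p: "p \<in> A \<union> (T - T')" by blast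
        have "inv v p \<in> A" using vinvA[OF p] .
        then have "g (inv v p) = inv v p" using gfix by blast
        then show "g' p = p" using bv by (simp add: g'_def bij_is_surj surj_f_inv_f)
      qed
      have cS1: "clopen_set (- A - (T - T'))" using cA T(1) T'(1)
        by (auto simp: clopen_set_def intro: open_Compl closed_Compl open_Diff closed_Diff)
      have g'H: "g' \<in> ?H"
        by (rule small_in[OF hG vig cA assms(5,6,7,8,9) Cne Dne assms(10) g'G cS1 _ g'fix, of t])
           (use t T(3) T'(4) in auto)
      define S2 where "S2 = T \<union> {p. g p \<in> T}"
      have cS2: "clopen_set S2" using T(1) clopen_preimage[OF _ T(1), of g] gG GH
        by (auto simp: S2_def clopen_set_def)
      have S2A: "S2 \<inter> A = {}" using T(3) gfix by (auto simp: S2_def)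
      have xfix: "\<forall>p. p \<notin> S2 \<longrightarrow> x p = p"
      proof (intro allI impI)
        fix p assume "p \<notin> S2"
        then have pT: "p \<notin> T" and gpT: "g p \<notin> T" by (auto simp: S2_def)
        show "x p = p"
        proof (cases "p \<in> A")
          case True
          then have gp: "g p = p" using gfix by blast
          have "inv v p \<in> A" using vinvA True by blast
          then have "g (inv v p) = inv v p" using gfix by blast
          then have "inv g (inv v p) = inv v p" by (rule inv_fix[OF bg])
          then show ?thesis using gp bv by (simp add: x_def bij_is_surj surj_f_inv_f)
        next
          case False
          have "g p \<notin> A"
          proof
            assume "g p \<in> A"
            then have "g (g p) = g p" using gfix by blast
            then have "g p = p" using bg by (metis bij_is_inj injD)
            then show False using False \<open>g p \<in> A\<close> by simp
          qed
          then have "g p \<notin> Y" using gpT by (simp add: Y_def)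
          then have "v (g p) = g p" using vfix by blast
          then have "inv v (g p) = g p" by (rule inv_fix[OF bv])
          moreover have "inv g (g p) = p" using bg by (simp add: bij_is_inj inv_f_f)
          moreover have "v p = p" using vfix False pT by (simp add: Y_def)
          ultimately show ?thesis by (simp add: x_def)
        qed
      qed
      have xH: "x \<in> ?H"
        by (rule small_in[OF hG vig cA assms(5,6,7,8,9) Cne Dne assms(10) xG cS2 S2A xfix, of q])
           (use q T(4) in \<open>auto simp: S2_def\<close>)
      show "g \<in> ?H" using gdec g'H xH by (simp add: gen_comp)
    qed
  qed
qed

end
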